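(* Let $n \ge 0$. If $\beta$ is a (contiguous) subword of $W$ with $|\beta| = |W_n|$ and $\beta \neq W_n$, then $d_0(W_n,\beta) > \frac16$.
   Context: Words are finite strings over $\{0,1\}$; $\alpha(i)$ is the $i$-th letter of $\alpha$ and $|\alpha|$ its length. Define $W_0 = 0$ and $W_{m+1} = W_m W_m 1 W_m$ for $m\ge0$, and let $W$ be the unique infinite word having every $W_m$ as an initial segment. For words $\alpha,\beta$ of equal length with $\alpha$ containing at least one $0$, $$d_0(\alpha,\beta) = \frac{|\{i : \alpha(i)=0 \text{ and } \beta(i)=1\}|}{|\{i : \alpha(i)=0\}|}.$$ *)

theory Defs
  imports Complex_Main
begin

text \<open>Words over {0,1} are lists of naturals (letters 0 and 1); letters indexed from 0.\<close>

fun Wm :: "nat \<Rightarrow> nat list" where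
  "Wm 0 = [0]"
| "Wm (Suc m) = Wm m @ Wm m @ [1] @ Wm m"

text \<open>The infinite word W: its i-th letter is the i-th letter of any W_m long enough.
  Since length (Wm m) = (3^(m+1)-1)/2 > m, the word Wm i has length > i;
  as each Wm m is a prefix of Wm (Suc m), this is the unique infinite word having
  every Wm m as initial segment.\<close>
definition W :: "nat \<Rightarrow> nat" where
  "W i = Wm i ! i"

definition subword_W :: "nat \<Rightarrow> nat \<Rightarrow> nat list" where
  "subword_W k l = map W [k..<k+l]"

definition d0 :: "nat list \<Rightarrow> nat list \<Rightarrow> real" where
  "d0 \<alpha> \<beta> = real (card {i. i < length \<alpha> \<and> \<alpha> ! i = 0 \<and> \<beta> ! i = 1})
              / real (card {i. i < length \<alpha> \<and> \<alpha> ! i = 0})"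

end

theory Submission
  imports Defs
begin


lemma Wm_len: "2 * length (Wm n) + 1 = 3^(Suc n)"
  by (induction n) auto

lemma Wm_len_gt: "n < length (Wm n)"
  by (induction n) auto

lemma Wm_ne: "Wm n \<noteq> []"
  using Wm_len_gt[of n] by auto

lemma Wm_prefix: "m \<le> M \<Longrightarrow> \<exists>t. Wm M = Wm m @ t"
proof (induction M rule: dec_induct)
  case base then show ?case by auto
next
  case (step M) then show ?case by auto
qed

lemma W_eq: assumes "i < length (Wm m)" shows "W i = Wm m ! i"
proof -
  obtain t1 where t1: "Wm (max i m) = Wm i @ t1" using Wm_prefix[of i "max i m"] by auto
  obtain t2 where t2: "Wm (max i m) = Wm m @ t2" using Wm_prefix[of m "max i m"] by auto
  have "W i = Wm i ! i" by (simp add: W_def)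
  also have "\<dots> = Wm (max i m) ! i" using t1 Wm_len_gt[of i] by (simp add: nth_append)
  also have "\<dots> = Wm m ! i" using t2 assms by (simp add: nth_append)
  finally show ?thesis .
qed

lemma Wm_bin: "set (Wm n) \<subseteq> {0,1}"
  by (induction n) auto

lemma Wm_hd: "Wm n ! 0 = 0"
  by (induction n) (auto simp: nth_append Wm_ne)

lemma Wm_last: "last (Wm n) = 0"
  by (induction n) (auto simp: Wm_ne)

lemma Wm_ones: "2 * length (filter (\<lambda>x. x = 1) (Wm n)) + 1 = 3^n"
  by (induction n) auto

lemma Wm_zeros: "length (filter (\<lambda>x. x = 0) (Wm n)) = 3^n"
  by (induction n) auto

definition blk :: "nat \<Rightarrow> nat \<Rightarrow> nat list" where
  "blk n x = (if x = 0 then Wm n else [1])"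

definition S :: "nat \<Rightarrow> nat list \<Rightarrow> nat list" where
  "S n xs = concat (map (blk n) xs)"

lemma S_simps[simp]: "S n [] = []" "S n (x#xs) = blk n x @ S n xs" "S n (xs @ ys) = S n xs @ S n ys"
  by (auto simp: S_def)

lemma S_blk1: "S n (blk 1 x) = blk (Suc n) x"
  by (auto simp: blk_def)

lemma S_comp: "S n (S 1 xs) = S (Suc n) xs"
  using S_blk1 by (induction xs) simp_all

lemma S_Wm: "S n (Wm m) = Wm (m+n)"
  by (induction m) (auto simp: blk_def)

definition pos :: "nat \<Rightarrow> nat list \<Rightarrow> nat \<Rightarrow> nat" where
  "pos n xs j = length (S n (take j xs))"

lemma blk_ne: "blk n x \<noteq> []"
  by (auto simp: blk_def Wm_ne)

lemma S_split: "j < length xs \<Longrightarrow> S n xs = S n (take j xs) @ blk n (xs!j) @ S n (drop (Suc j) xs)"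
  by (metis S_simps(2,3) id_take_nth_drop)

lemma pos_Suc: "j < length xs \<Longrightarrow> pos n xs (Suc j) = pos n xs j + length (blk n (xs!j))"
  by (simp add: pos_def take_Suc_conv_app_nth)

lemma pos_0[simp]: "pos n xs 0 = 0"
  by (simp add: pos_def)

lemma S_nth_blk: "j < length xs \<Longrightarrow> r < length (blk n (xs!j)) \<Longrightarrow> S n xs ! (pos n xs j + r) = blk n (xs!j) ! r"
  by (subst S_split[of j xs n]) (auto simp: pos_def nth_append)

lemma pos_ge: "length xs \<le> j \<Longrightarrow> pos n xs j = length (S n xs)"
  by (simp add: pos_def)

lemma pos_blk_le: "j < length xs \<Longrightarrow> pos n xs j + length (blk n (xs!j)) \<le> length (S n xs)"
proof -
  assume j: "j < length xs"
  have "length (S n xs) = length (S n (take j xs) @ blk n (xs!j) @ S n (drop (Suc j) xs))"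
    using S_split[OF j] by metis
  then show ?thesis by (simp add: pos_def)
qed

lemma pos_lt: "j < length xs \<Longrightarrow> pos n xs j < length (S n xs)"
  using pos_blk_le[of j xs n] blk_ne[of n "xs!j"] by (cases "blk n (xs!j)") auto

lemma pos_lt_len: "pos n xs j < length (S n xs) \<Longrightarrow> j < length xs"
  using pos_ge[of xs j n] by (cases "j < length xs") auto

lemma locate: "p < length (S n xs) \<Longrightarrow> \<exists>j < length xs. pos n xs j \<le> p \<and> p < pos n xs (Suc j)"
proof (induction xs rule: rev_induct)
  case Nil then show ?case by simp
next
  case (snoc x xs)
  show ?case
  proof (cases "p < length (S n xs)")
    case True
    then obtain j where "j < length xs" "pos n xs j \<le> p" "p < pos n xs (Suc j)" using snoc.IH by auto
    then show ?thesis by (intro exI[of _ j]) (auto simp: pos_def)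
  next
    case False
    then show ?thesis using snoc.prems by (intro exI[of _ "length xs"]) (auto simp: pos_def)
  qed
qed

lemma blk_len0: "length (blk 0 x) = 1"
  by (simp add: blk_def)




lemma Wm_S1: "Wm (Suc m) = S 1 (Wm m)"
  using S_Wm[of 1 m] by simp

lemma Wm_bin': "x \<in> set (Wm n) \<Longrightarrow> x = 0 \<or> x = 1"
  using Wm_bin by auto

lemma Wm_nth_bin: "p < length (Wm n) \<Longrightarrow> Wm n ! p \<noteq> 0 \<Longrightarrow> Wm n ! p = 1"
  using Wm_bin'[of "Wm n ! p" n] by auto

lemma blk1_0: "blk 1 0 = [0,0,1,0]" "blk (Suc 0) 0 = [0,0,1,0]" by (simp_all add: blk_def)
lemma blk_n0: "x \<noteq> 0 \<Longrightarrow> blk n x = [1]" by (simp add: blk_def)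

lemma no11: "Suc p < length (Wm m) \<Longrightarrow> Wm m ! p = 1 \<Longrightarrow> Wm m ! Suc p = 0"
proof (induction m arbitrary: p)
  case 0 then show ?case by simp
next
  case (Suc m)
  let ?V = "Wm m"
  have eq: "Wm (Suc m) = S 1 ?V" by (rule Wm_S1)
  have "p < length (S 1 ?V)" using Suc.prems eq by (metis Suc_lessD)
  then obtain j where j: "j < length ?V" "pos 1 ?V j \<le> p" "p < pos 1 ?V (Suc j)" using locate by blast
  define r where "r = p - pos 1 ?V j"
  have pr: "p = pos 1 ?V j + r" using j r_def by simp
  show ?case
  proof (cases "?V ! j = 0")
    case True
    have rl: "r < 4" using j pos_Suc[of j ?V 1] True by (simp add: blk1_0 r_def)
    have "S 1 ?V ! p = [0,0,1,0] ! r" using S_nth_blk[of j ?V r 1] True rl j by (simp add: pr blk1_0)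
    then have "r = 2" using Suc.prems eq rl by (auto simp: less_Suc_eq numeral_eq_Suc)
    then have sp: "Suc p = pos 1 ?V j + 3" using pr by simp
    have "S 1 ?V ! (pos 1 ?V j + 3) = [0,0,1,0] ! 3" using S_nth_blk[of j ?V 3 1] True j
      by (simp add: blk1_0)
    then have "S 1 ?V ! (pos 1 ?V j + 3) = 0" by simp
    then have "S 1 ?V ! Suc p = 0" by (simp only: sp)
    then show ?thesis using eq by simp
  next
    case False
    have r0: "r = 0" using j pos_Suc[of j ?V 1] False by (simp add: blk_n0 r_def)
    have ps: "pos 1 ?V (Suc j) = Suc p" using pos_Suc[of j ?V 1] j False r0 pr by (simp add: blk_n0)
    have sj: "Suc j < length ?V" using pos_lt_len[of 1 ?V "Suc j"] ps Suc.prems(1) eq by metis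
    have "?V ! Suc j = 0" using Suc.IH[of j] sj Wm_nth_bin[of j m] j False by simp
    then have "S 1 ?V ! (pos 1 ?V (Suc j) + 0) = 0" using S_nth_blk[of "Suc j" ?V 0 1] sj
      by (simp add: blk1_0)
    then show ?thesis using ps eq by simp
  qed
qed

lemma no0000: "p + 3 < length (Wm m) \<Longrightarrow> Wm m ! p = 0 \<Longrightarrow> Wm m ! (p+1) = 0 \<Longrightarrow> Wm m ! (p+2) = 0
   \<Longrightarrow> Wm m ! (p+3) \<noteq> 0"
proof (cases m)
  case 0 then show "p + 3 < length (Wm m) \<Longrightarrow> ?thesis" by simp
next
  case (Suc m')
  assume a: "p + 3 < length (Wm m)" "Wm m ! p = 0" "Wm m ! (p+1) = 0" "Wm m ! (p+2) = 0"
  let ?V = "Wm m'"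
  have eq: "Wm m = S 1 ?V" using Wm_S1 Suc by simp
  have "p < length (S 1 ?V)" using a eq by simp
  then obtain j where j: "j < length ?V" "pos 1 ?V j \<le> p" "p < pos 1 ?V (Suc j)" using locate by blast
  define r where "r = p - pos 1 ?V j"
  have pr: "p = pos 1 ?V j + r" using j r_def by simp
  show ?thesis
  proof (cases "?V ! j = 0")
    case True
    have rl: "r < 4" using j pos_Suc[of j ?V 1] True by (simp add: blk1_0 r_def)
    have nth: "\<And>s. s < 4 \<Longrightarrow> S 1 ?V ! (pos 1 ?V j + s) = [0,0,1,0] ! s"
      using S_nth_blk[of j ?V _ 1] True j by (simp add: blk1_0)
    have "r = 3"
    proof -
      have "r \<noteq> 0"
      proof
        assume "r = 0"
        then have "p + 2 = pos 1 ?V j + 2" using pr by simp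
        then show False using nth[of 2] a eq by simp
      qed
      moreover have "r \<noteq> 1"
      proof
        assume "r = 1"
        then have "p + 1 = pos 1 ?V j + 2" using pr by simp
        then show False using nth[of 2] a eq by simp
      qed
      moreover have "r \<noteq> 2"
      proof
        assume "r = 2"
        then have "p = pos 1 ?V j + 2" using pr by simp
        then show False using nth[of 2] a eq by simp
      qed
      ultimately show ?thesis using rl by linarith
    qed
    have ps: "pos 1 ?V (Suc j) = p + 1" using pos_Suc[of j ?V 1] j True \<open>r = 3\<close> pr by (simp add: blk1_0)
    have sj: "Suc j < length ?V" using pos_lt_len[of 1 ?V "Suc j"] ps a eq by simp
    have nth2: "\<And>s. s < length (blk 1 (?V ! Suc j)) \<Longrightarrow> S 1 ?V ! (p + 1 + s) = blk 1 (?V ! Suc j) ! s"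
      using S_nth_blk[of "Suc j" ?V _ 1] sj ps by simp
    show ?thesis
    proof (cases "?V ! Suc j = 0")
      case True
      then have "S 1 ?V ! (p + 1 + 2) = 1" using nth2[of 2] by (simp add: blk1_0)
      then have "S 1 ?V ! (p + 3) = 1" by (metis add.assoc one_plus_numeral semiring_norm(3))
      then show ?thesis using eq by simp
    next
      case False
      then show ?thesis using nth2[of 0] a eq by (simp add: blk_n0)
    qed
  next
    case False
    have r0: "r = 0" using j pos_Suc[of j ?V 1] False by (simp add: blk_n0 r_def)
    then show ?thesis using S_nth_blk[of j ?V 0 1] j False a eq pr by (simp add: blk_n0)
  qed
qed

lemma recog1:
  assumes "j + 2 < length (S 1 V)" "S 1 V ! j = 0" "S 1 V ! (j+1) = 0" "S 1 V ! (j+2) = 1"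
  shows "\<exists>i < length V. V ! i = 0 \<and> j = pos 1 V i"
proof -
  have "j < length (S 1 V)" using assms by simp
  then obtain i where i: "i < length V" "pos 1 V i \<le> j" "j < pos 1 V (Suc i)" using locate by blast
  define r where "r = j - pos 1 V i"
  have pr: "j = pos 1 V i + r" using i r_def by simp
  show ?thesis
  proof (cases "V ! i = 0")
    case False
    have r0: "r = 0" using i pos_Suc[of i V 1] False by (simp add: blk_n0 r_def)
    then show ?thesis using S_nth_blk[of i V 0 1] i False assms pr by (simp add: blk_n0)
  next
    case True
    have rl: "r < 4" using i pos_Suc[of i V 1] True by (simp add: blk1_0 r_def)
    have nth: "\<And>s. s < 4 \<Longrightarrow> S 1 V ! (pos 1 V i + s) = [0,0,1,0] ! s"
      using S_nth_blk[of i V _ 1] True i by (simp add: blk1_0)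
    have "r \<noteq> 1" using nth[of 2] assms pr by (auto simp: add.assoc)
    moreover have "r \<noteq> 2" using nth[of 2] assms pr by auto
    moreover have "r \<noteq> 3"
    proof
      assume r3: "r = 3"
      have ps: "pos 1 V (Suc i) = j + 1" using pos_Suc[of i V 1] i True r3 pr by (simp add: blk1_0)
      have si: "Suc i < length V" using pos_lt_len[of 1 V "Suc i"] ps assms by simp
      have nth2: "\<And>s. s < length (blk 1 (V ! Suc i)) \<Longrightarrow> S 1 V ! (j + 1 + s) = blk 1 (V ! Suc i) ! s"
        using S_nth_blk[of "Suc i" V _ 1] si ps by simp
      show False
      proof (cases "V ! Suc i = 0")
        case True
        then show ?thesis using nth2[of 1] assms by (simp add: blk1_0 add.assoc)
      next
        case False
        then show ?thesis using nth2[of 0] assms by (simp add: blk_n0)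
      qed
    qed
    ultimately have "r = 0" using rl by linarith
    then show ?thesis using i True pr by auto
  qed
qed




declare Wm.simps(2)[simp del]

lemma blk_0: "blk n 0 = Wm n" by (simp add: blk_def)

lemma take_pos: "take (pos n xs i) (S n xs) = S n (take i xs)"
proof -
  have "S n xs = S n (take i xs) @ S n (drop i xs)" by (metis S_simps(3) append_take_drop_id)
  then show ?thesis by (metis append_eq_conv_conj pos_def)
qed

lemma recog:
  "k + length (Wm n) \<le> length (Wm (M+n)) \<Longrightarrow> (\<forall>i<length (Wm n). Wm (M+n) ! (k+i) = Wm n ! i)
   \<Longrightarrow> \<exists>j<length (Wm M). Wm M ! j = 0 \<and> k = pos n (Wm M) j"
proof (induction n arbitrary: M k)
  case 0
  let ?U = "Wm M"
  have eq: "Wm (M+0) = S 0 ?U" using S_Wm[of 0 M] by simp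
  have k: "k < length (S 0 ?U)" using 0 eq by simp
  then obtain j where j: "j < length ?U" "pos 0 ?U j \<le> k" "k < pos 0 ?U (Suc j)" using locate by blast
  have kj: "k = pos 0 ?U j" using j pos_Suc[of j ?U 0] by (simp add: blk_len0)
  have "S 0 ?U ! (pos 0 ?U j + 0) = blk 0 (?U ! j) ! 0" using S_nth_blk[of j ?U 0 0] j by (simp add: blk_len0)
  moreover have "S 0 ?U ! k = 0" using 0 eq by auto
  ultimately have "?U ! j = 0" using kj by (cases "?U ! j = 0") (auto simp: blk_n0)
  then show ?case using j kj by auto
next
  case (Suc n)
  let ?A = "Wm n" let ?L = "length (Wm n)"
  let ?U = "Wm (Suc M)"
  let ?V = "Wm M"
  have eq: "Wm (M + Suc n) = S n ?U" using S_Wm[of n "Suc M"] by simp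
  have LS: "length (Wm (Suc n)) = 3 * ?L + 1" by (simp add: Wm.simps(2)[of n])
  have m: "\<And>i. i < 3 * ?L + 1 \<Longrightarrow> S n ?U ! (k+i) = Wm (Suc n) ! i" using Suc.prems eq LS by auto
  have kl: "k + 3 * ?L + 1 \<le> length (S n ?U)" using Suc.prems eq LS by simp
  have "\<forall>i<?L. Wm (Suc M + n) ! (k+i) = ?A ! i"
    using m eq by (auto simp: nth_append Wm.simps(2)[of n])
  then obtain j where j: "j < length ?U" "?U ! j = 0" "k = pos n ?U j"
    using Suc.IH[of k "Suc M"] kl eq by auto
  have p1: "pos n ?U (Suc j) = k + ?L" using pos_Suc[of j ?U n] j by (simp add: blk_0)
  have j1: "Suc j < length ?U" using pos_lt_len[of n ?U "Suc j"] p1 kl Wm_ne[of n] by simp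
  have "S n ?U ! (k + ?L) = ?A ! 0" using m[of ?L] Wm_ne[of n] by (simp add: nth_append Wm.simps(2)[of n])
  then have u1: "?U ! Suc j = 0"
    using S_nth_blk[of "Suc j" ?U 0 n] j1 p1 Wm_hd[of n] by (cases "?U ! Suc j = 0") (auto simp: blk_n0)
  have p2: "pos n ?U (Suc (Suc j)) = k + 2 * ?L" using pos_Suc[of "Suc j" ?U n] j1 u1 p1 by (simp add: blk_0)
  have j2: "Suc (Suc j) < length ?U" using pos_lt_len[of n ?U "Suc (Suc j)"] p2 kl Wm_ne[of n] by simp
  have "S n ?U ! (k + 2 * ?L) = 1" using m[of "2 * ?L"] Wm_ne[of n] by (simp add: nth_append Wm.simps(2)[of n])
  then have u2: "?U ! Suc (Suc j) \<noteq> 0"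
  proof (intro notI)
    assume z: "?U ! Suc (Suc j) = 0" and o: "S n ?U ! (k + 2 * ?L) = 1"
    have "S n ?U ! (pos n ?U (Suc (Suc j)) + 0) = blk n (?U ! Suc (Suc j)) ! 0"
      using S_nth_blk[of "Suc (Suc j)" ?U 0 n] j2 blk_ne[of n "?U ! Suc (Suc j)"] by simp
    then show False using z o p2 Wm_hd[of n] by (simp add: blk_0)
  qed
  then have u2': "?U ! Suc (Suc j) = 1" using Wm_nth_bin j2 by blast
  have eqU: "?U = S 1 ?V" by (rule Wm_S1)
  obtain i where i: "i < length ?V" "?V ! i = 0" "j = pos 1 ?V i"
    using recog1[of j ?V] j j1 j2 u1 u2' eqU by (auto simp: Suc_lessD)
  have "k = length (S n (take (pos 1 ?V i) (S 1 ?V)))" using j i eqU by (simp add: pos_def)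
  also have "\<dots> = length (S n (S 1 (take i ?V)))" by (simp add: take_pos)
  also have "\<dots> = pos (Suc n) ?V i" using S_comp[of n "take i ?V"] by (simp add: pos_def)
  finally show ?case using i by auto
qed




definition pc :: "nat list \<Rightarrow> nat list \<Rightarrow> nat" where
  "pc xs ys = length (filter (\<lambda>(a,b). a = 0 \<and> b = 1) (zip xs ys))"

definition cnt :: "nat list \<Rightarrow> nat \<Rightarrow> nat" where
  "cnt xs k = pc xs (subword_W k (length xs))"

definition ones :: "nat list \<Rightarrow> nat" where
  "ones xs = length (filter (\<lambda>x. x = 1) xs)"

lemma SW_len[simp]: "length (subword_W k l) = l"
  by (simp add: subword_W_def)

lemma SW_nth: "i < l \<Longrightarrow> subword_W k l ! i = W (k+i)"
  by (simp add: subword_W_def)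

lemma SW_add: "subword_W k (a+b) = subword_W k a @ subword_W (k+a) b"
proof -
  have "[k..<k+(a+b)] = [k..<k+a] @ [k+a..<k+a+b]" using upt_add_eq_append[of k "k+a" b] by (simp add: add.assoc)
  then show ?thesis by (simp add: subword_W_def)
qed

lemma SW_Suc: "subword_W k (Suc l) = W k # subword_W (Suc k) l"
  by (simp add: subword_W_def upt_conv_Cons del: upt_Suc)

lemma pc_Cons[simp]: "pc (x#xs) (y#ys) = (if x = 0 \<and> y = 1 then 1 else 0) + pc xs ys"
  by (simp add: pc_def)

lemma pc_Nil[simp]: "pc [] ys = 0"
  by (simp add: pc_def)

lemma pc_append: "length xs = length ys \<Longrightarrow> pc (xs @ xs') (ys @ ys') = pc xs ys + pc xs' ys'"
  by (simp add: pc_def)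

lemma cnt_append: "cnt (xs @ ys) k = cnt xs k + cnt ys (k + length xs)"
  by (simp add: cnt_def SW_add pc_append)

lemma cnt_one: "cnt [1] k = 0"
  by (simp add: cnt_def subword_W_def pc_def)

lemma W_bin: "W p = 0 \<or> W p = 1"
  using Wm_bin'[of "Wm p ! p" p] Wm_len_gt[of p] by (simp add: W_def)

fun ok :: "nat list \<Rightarrow> bool" where
  "ok [] = True"
| "ok [x] = (x = 0 \<or> x = 1)"
| "ok (x#y#zs) = ((x = 0 \<or> x = 1) \<and> (x = 1 \<longrightarrow> y = 0) \<and> ok (y#zs))"

lemma ok_iff: "ok xs \<longleftrightarrow> (\<forall>x\<in>set xs. x = 0 \<or> x = 1) \<and> (\<forall>p. Suc p < length xs \<longrightarrow> xs!p = 1 \<longrightarrow> xs!Suc p = 0)"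
proof (induction xs rule: ok.induct)
  case (3 x y zs)
  show ?case
  proof
    assume a: "ok (x#y#zs)"
    then have "(\<forall>x\<in>set (y#zs). x = 0 \<or> x = 1) \<and> (\<forall>p. Suc p < length (y#zs) \<longrightarrow> (y#zs)!p = 1 \<longrightarrow> (y#zs)!Suc p = 0)"
      using 3 by simp
    then show "(\<forall>z\<in>set (x#y#zs). z = 0 \<or> z = 1) \<and> (\<forall>p. Suc p < length (x#y#zs) \<longrightarrow> (x#y#zs)!p = 1 \<longrightarrow> (x#y#zs)!Suc p = 0)"
      using a by (auto simp: nth_Cons split: nat.splits)
  next
    assume a: "(\<forall>z\<in>set (x#y#zs). z = 0 \<or> z = 1) \<and> (\<forall>p. Suc p < length (x#y#zs) \<longrightarrow> (x#y#zs)!p = 1 \<longrightarrow> (x#y#zs)!Suc p = 0)"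
    have "x = 1 \<longrightarrow> y = 0" using a[THEN conjunct2, rule_format, of 0] by simp
    moreover have "\<forall>p. Suc p < length (y#zs) \<longrightarrow> (y#zs)!p = 1 \<longrightarrow> (y#zs)!Suc p = 0"
    proof (intro allI impI)
      fix p assume "Suc p < length (y#zs)" "(y#zs)!p = 1"
      then show "(y#zs)!Suc p = 0" using a[THEN conjunct2, rule_format, of "Suc p"] by simp
    qed
    ultimately show "ok (x#y#zs)" using a 3 by simp
  qed
qed auto

lemma ok_Wm: "ok (Wm n)"
  unfolding ok_iff using Wm_bin' no11 by blast

lemma G1: "ok (x#ys) \<Longrightarrow> pc (x#ys) (ys @ [e]) = ones ys + (if last (x#ys) = 0 \<and> e = 1 then 1 else 0)"
proof (induction ys arbitrary: x)
  case Nil then show ?case by (simp add: ones_def)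
next
  case (Cons y ys)
  have "ok (y#ys)" using Cons.prems by simp
  then show ?case using Cons.IH[of y] Cons.prems by (auto simp: ones_def)
qed

lemma G2: "ok zs \<Longrightarrow> pc zs (e # zs) = (if zs \<noteq> [] \<and> hd zs = 0 \<and> e = 1 then 1 else 0) + ones (butlast zs)"
proof (induction zs arbitrary: e)
  case Nil then show ?case by (simp add: ones_def)
next
  case (Cons z zs)
  show ?case
  proof (cases zs)
    case Nil then show ?thesis by (simp add: ones_def)
  next
    case (Cons z' zs')
    have "ok zs" using Cons.prems \<open>zs = z'#zs'\<close> by simp
    then show ?thesis using Cons.IH[of z] Cons.prems \<open>zs = z'#zs'\<close> by (auto simp: ones_def)
  qed
qed

lemma ones_tl: "ones (Wm n) = ones (tl (Wm n))"
  using Wm_hd[of n] Wm_ne[of n] by (cases "Wm n") (auto simp: ones_def)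

lemma ones_butlast: "ones (Wm n) = ones (butlast (Wm n))"
proof -
  have "Wm n = butlast (Wm n) @ [0]" using Wm_last[of n] Wm_ne[of n] by (metis append_butlast_last_id)
  then have "ones (Wm n) = ones (butlast (Wm n) @ [0])" by simp
  then show ?thesis by (simp add: ones_def)
qed

lemma LA:
  assumes "subword_W q (length (Wm n)) = Wm n" "W (q + length (Wm n)) = 1"
  shows "cnt (Wm n) (q+1) = ones (Wm n) + 1"
proof -
  let ?A = "Wm n" let ?L = "length (Wm n)"
  have "subword_W q (?L + 1) = ?A @ [1]" using SW_add[of q ?L 1] assms by (simp add: subword_W_def)
  moreover have "subword_W q (Suc ?L) = W q # subword_W (Suc q) ?L" by (rule SW_Suc)
  ultimately have s: "subword_W (q+1) ?L = tl ?A @ [1]" using Wm_ne[of n]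
    by (metis Suc_eq_plus1 list.sel(3) tl_append2)
  have A: "?A = 0 # tl ?A" using Wm_hd[of n] Wm_ne[of n] by (cases ?A) auto
  have "cnt ?A (q+1) = pc (0 # tl ?A) (tl ?A @ [1])" using s A by (simp add: cnt_def)
  also have "\<dots> = ones (tl ?A) + 1" using G1[of 0 "tl ?A" 1] ok_Wm[of n] A Wm_last[of n] by simp
  finally show ?thesis using ones_tl by simp
qed

lemma zip_take_len: "zip xs (take (length xs) ys) = zip xs ys"
  by (induction xs arbitrary: ys) (auto simp: take_Cons' zip_Cons1 split: list.splits)

lemma LB:
  assumes "subword_W (q+1) (length (Wm n)) = Wm n"
  shows "cnt (Wm n) q = ones (Wm n) + (if W q = 1 then 1 else 0)"
proof -
  let ?A = "Wm n" let ?L = "length (Wm n)"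
  obtain L' where L': "?L = Suc L'" using Wm_ne[of n] by (cases ?L) auto
  have "subword_W (q+1) (L' + 1) = subword_W (q+1) L' @ subword_W (q+1+L') 1" by (rule SW_add)
  then have t: "subword_W (q+1) L' = take L' ?A" using assms L' by (metis Suc_eq_plus1 SW_len append_eq_conv_conj)
  have "subword_W q ?L = W q # take L' ?A" using SW_Suc[of q L'] L' t by simp
  also have "\<dots> = take ?L (W q # ?A)" using L' by simp
  finally have "cnt ?A q = pc ?A (take ?L (W q # ?A))" by (simp add: cnt_def)
  also have "\<dots> = pc ?A (W q # ?A)" by (simp add: pc_def zip_take_len)
  also have "\<dots> = (if W q = 1 then 1 else 0) + ones (butlast ?A)"
    using G2[of ?A "W q"] ok_Wm[of n] Wm_ne[of n] Wm_hd[of n] by (simp add: hd_conv_nth)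
  finally show ?thesis using ones_butlast[of n] by simp
qed




lemma main: "subword_W k (length (Wm n)) \<noteq> Wm n \<Longrightarrow> 3^n + 3 \<le> 6 * cnt (Wm n) k"
proof (induction n arbitrary: k)
  case 0
  have s: "subword_W k 1 = [W k]" by (simp add: subword_W_def)
  then have "W k \<noteq> 0" using 0 by auto
  then have "W k = 1" using W_bin[of k] by simp
  then have "cnt [0] k = 1" using s by (simp add: cnt_def)
  then show ?case by simp
next
  case (Suc n)
  let ?A = "Wm n" let ?L = "length (Wm n)"
  define c' where "c' = cnt (Wm (Suc n)) k"
  have WS: "Wm (Suc n) = ?A @ ?A @ [1] @ ?A" by (rule Wm.simps(2))
  have Lpos: "0 < ?L" using Wm_ne[of n] by simp
  have sw: "subword_W k (length (Wm (Suc n))) = subword_W k ?L @ subword_W (k+?L) ?L @ [W (k+2*?L)] @ subword_W (k+2*?L+1) ?L"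
  proof -
    have l: "length (Wm (Suc n)) = ?L + (?L + (1 + ?L))" using WS by simp
    have a: "subword_W k (?L + (?L + (1 + ?L))) = subword_W k ?L @ subword_W (k+?L) (?L + (1 + ?L))" by (rule SW_add)
    have b: "subword_W (k+?L) (?L + (1 + ?L)) = subword_W (k+?L) ?L @ subword_W (k+?L+?L) (1 + ?L)" by (rule SW_add)
    have c: "subword_W (k+?L+?L) (1 + ?L) = subword_W (k+?L+?L) 1 @ subword_W (k+?L+?L+1) ?L" by (rule SW_add)
    have d: "subword_W (k+?L+?L) 1 = [W (k+2*?L)]" by (simp add: subword_W_def mult_2 add.assoc)
    have e: "k+?L+?L+1 = k+2*?L+1" by simp
    show ?thesis unfolding l a b c d e by simp
  qed
  have cS: "c' = cnt ?A k + cnt ?A (k+?L) + cnt ?A (k+2*?L+1)"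
    unfolding c'_def WS cnt_append cnt_one by (simp add: mult_2 add.assoc)
  have on: "2 * ones ?A + 1 = 3^n" using Wm_ones[of n] by (simp add: ones_def)
  define M where "M = k + 3 * ?L + 5"
  let ?U = "Wm M"
  let ?big = "Wm (M+n)"
  have eqb: "?big = S n ?U" using S_Wm[of n M] by simp
  have lb: "k + 3 * ?L + 5 < length ?big" using Wm_len_gt[of "M+n"] M_def by simp
  have Wb: "\<And>p. p < length ?big \<Longrightarrow> W p = ?big ! p" by (rule W_eq)
  have occ: "\<And>q. q \<le> k + 2*?L + 1 \<Longrightarrow> subword_W q ?L = ?A \<Longrightarrow> \<exists>j<length ?U. ?U ! j = 0 \<and> q = pos n ?U j"
  proof -
    fix q assume q: "q \<le> k + 2*?L + 1" "subword_W q ?L = ?A"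
    have ql: "q + ?L \<le> length ?big" using q lb by simp
    have "\<forall>i<?L. ?big ! (q+i) = ?A ! i"
    proof (intro allI impI)
      fix i assume i: "i < ?L"
      have "?A ! i = subword_W q ?L ! i" using q by simp
      also have "\<dots> = W (q+i)" using i by (simp add: SW_nth)
      also have "\<dots> = ?big ! (q+i)" using Wb i ql by simp
      finally show "?big ! (q+i) = ?A ! i" by simp
    qed
    then show "\<exists>j<length ?U. ?U ! j = 0 \<and> q = pos n ?U j" using recog[of q n M] ql by blast
  qed
  have blkA: "\<And>j. j < length ?U \<Longrightarrow> ?U ! j = 0 \<Longrightarrow> subword_W (pos n ?U j) ?L = ?A"
  proof -
    fix j assume j: "j < length ?U" "?U ! j = 0"
    have le: "pos n ?U j + ?L \<le> length ?big" using pos_blk_le[of j ?U n] j eqb by (simp add: blk_0)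
    show "subword_W (pos n ?U j) ?L = ?A"
    proof (rule nth_equalityI)
      fix i assume i: "i < length (subword_W (pos n ?U j) ?L)"
      then have i': "i < ?L" by simp
      have "subword_W (pos n ?U j) ?L ! i = W (pos n ?U j + i)" using i' by (simp add: SW_nth)
      also have "\<dots> = S n ?U ! (pos n ?U j + i)" using Wb[of "pos n ?U j + i"] le i' eqb by simp
      also have "\<dots> = ?A ! i" using S_nth_blk[of j ?U i n] j i' by (simp add: blk_0)
      finally show "subword_W (pos n ?U j) ?L ! i = ?A ! i" .
    qed simp
  qed
  have blk1: "\<And>j. j < length ?U \<Longrightarrow> ?U ! j \<noteq> 0 \<Longrightarrow> W (pos n ?U j) = 1"
  proof -
    fix j assume j: "j < length ?U" "?U ! j \<noteq> 0"
    have "pos n ?U j < length ?big" using pos_lt[of j ?U n] j eqb by simp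
    then have "W (pos n ?U j) = S n ?U ! (pos n ?U j + 0)" using Wb eqb by simp
    also have "\<dots> = 1" using S_nth_blk[of j ?U 0 n] j by (simp add: blk_n0)
    finally show "W (pos n ?U j) = 1" .
  qed
  have ps0: "\<And>j. j < length ?U \<Longrightarrow> ?U ! j = 0 \<Longrightarrow> pos n ?U (Suc j) = pos n ?U j + ?L"
    using pos_Suc by (simp add: blk_0)
  have ps1: "\<And>j. j < length ?U \<Longrightarrow> ?U ! j \<noteq> 0 \<Longrightarrow> pos n ?U (Suc j) = pos n ?U j + 1"
    using pos_Suc by (simp add: blk_n0)
  have inU: "\<And>j. pos n ?U j < length ?big \<Longrightarrow> j < length ?U"
    using pos_lt_len eqb by metis
  have U01: "\<And>j. j < length ?U \<Longrightarrow> ?U ! j \<noteq> 0 \<Longrightarrow> ?U ! j = 1"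
    using Wm_nth_bin by blast
  have Ub: "\<And>j. Suc j < length ?U \<Longrightarrow> ?U ! Suc j \<noteq> 0 \<Longrightarrow> ?U ! j = 0"
    using no11[of _ M] U01 by (metis Suc_lessD)
  have U0: "?U ! 0 = 0" by (rule Wm_hd)
  have IH1: "\<And>q. subword_W q ?L \<noteq> ?A \<Longrightarrow> 1 \<le> cnt ?A q"
  proof -
    fix q assume "subword_W q ?L \<noteq> ?A"
    then have "3^n + 3 \<le> 6 * cnt ?A q" using Suc.IH by blast
    then show "1 \<le> cnt ?A q" by simp
  qed
  have goal_from: "ones ?A + 1 \<le> c' \<Longrightarrow> 3^(Suc n) + 3 \<le> 6 * cnt (Wm (Suc n)) k"
  proof -
    assume h: "ones ?A + 1 \<le> c'"
    have A: "6 * ones ?A + 6 \<le> 6 * c'" using h by simp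
    have B: "3 * 3^n = 6 * ones ?A + 3" by (simp add: on[symmetric])
    from A B have "3 * 3^n + 3 \<le> 6 * c'" by linarith
    then show ?thesis unfolding c'_def power_Suc .
  qed
  show ?case
  proof (cases "subword_W k ?L = ?A")
    case E1: True
    obtain j where j: "j < length ?U" "?U ! j = 0" "k = pos n ?U j" using occ[of k] E1 by auto
    have p1: "pos n ?U (Suc j) = k + ?L" using ps0 j by simp
    have j1: "Suc j < length ?U" using inU[of "Suc j"] p1 lb by simp
    show ?thesis
    proof (cases "?U ! Suc j = 0")
      case u1: True
      have E2: "subword_W (k+?L) ?L = ?A" using blkA[of "Suc j"] j1 u1 p1 by simp
      have p2: "pos n ?U (Suc (Suc j)) = k + 2*?L" using ps0[of "Suc j"] j1 u1 p1 by simp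
      have j2: "Suc (Suc j) < length ?U" using inU[of "Suc (Suc j)"] p2 lb by simp
      show ?thesis
      proof (cases "?U ! Suc (Suc j) = 0")
        case u2: False
        have w: "W (k + 2*?L) = 1" using blk1[of "Suc (Suc j)"] j2 u2 p2 by simp
        have p3: "pos n ?U (Suc (Suc (Suc j))) = k + 2*?L + 1" using ps1[of "Suc (Suc j)"] j2 u2 p2 by simp
        have j3: "Suc (Suc (Suc j)) < length ?U" using inU[of "Suc (Suc (Suc j))"] p3 lb by simp
        have u3: "?U ! Suc (Suc (Suc j)) = 0" using no11[of "Suc (Suc j)" M] j3 U01[of "Suc (Suc j)"] j2 u2 by simp
        have E3: "subword_W (k+2*?L+1) ?L = ?A" using blkA[of "Suc (Suc (Suc j))"] j3 u3 p3 by simp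
        have "subword_W k (length (Wm (Suc n))) = Wm (Suc n)" using sw E1 E2 E3 w WS by simp
        then show ?thesis using Suc.prems by simp
      next
        case u2: True
        have E3': "subword_W (k+2*?L) ?L = ?A" using blkA[of "Suc (Suc j)"] j2 u2 p2 by simp
        have p3: "pos n ?U (Suc (Suc (Suc j))) = k + 3*?L" using ps0[of "Suc (Suc j)"] j2 u2 p2 by simp
        have j3: "Suc (Suc (Suc j)) < length ?U" using inU[of "Suc (Suc (Suc j))"] p3 lb by simp
        have u3: "?U ! Suc (Suc (Suc j)) \<noteq> 0"
          using no0000[of j M] j3 j u1 u2 by (simp add: numeral_eq_Suc)
        have w: "W (k + 2*?L + ?L) = 1" using blk1[of "Suc (Suc (Suc j))"] j3 u3 p3 by (simp add: algebra_simps)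
        have "cnt ?A (k+2*?L+1) = ones ?A + 1" using LA[of "k+2*?L" n] E3' w by simp
        then show ?thesis using goal_from cS by simp
      qed
    next
      case u1: False
      have w: "W (k + ?L) = 1" using blk1[of "Suc j"] j1 u1 p1 by simp
      have p2: "pos n ?U (Suc (Suc j)) = k + ?L + 1" using ps1[of "Suc j"] j1 u1 p1 by simp
      have j2: "Suc (Suc j) < length ?U" using inU[of "Suc (Suc j)"] p2 lb by simp
      have u2: "?U ! Suc (Suc j) = 0" using no11[of "Suc j" M] j2 U01[of "Suc j"] j1 u1 by simp
      have "subword_W (k+?L+1) ?L = ?A" using blkA[of "Suc (Suc j)"] j2 u2 p2 by simp
      then have "cnt ?A (k+?L) = ones ?A + 1" using LB[of "k+?L" n] w by simp
      then show ?thesis using goal_from cS by simp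
    qed
  next
    case nE1: False
    show ?thesis
    proof (cases "subword_W (k+?L) ?L = ?A")
      case E2: True
      obtain j where j: "j < length ?U" "?U ! j = 0" "k + ?L = pos n ?U j" using occ[of "k+?L"] E2 by auto
      obtain j1 where j1: "j = Suc j1" using j Lpos by (cases j) auto
      have j1l: "j1 < length ?U" using j j1 by simp
      have u1: "?U ! j1 \<noteq> 0"
      proof
        assume "?U ! j1 = 0"
        then have "pos n ?U j1 = k" using ps0[of j1] j1l j j1 by simp
        then show False using blkA[of j1] j1l \<open>?U ! j1 = 0\<close> nE1 by simp
      qed
      have p1: "pos n ?U j1 + 1 = k + ?L" using ps1[of j1] j1l u1 j j1 by simp
      obtain j2 where j2: "j1 = Suc j2" using u1 U0 by (cases j1) auto
      have u2: "?U ! j2 = 0" using Ub[of j2] j1l u1 j2 by simp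
      have "pos n ?U j2 + ?L + 1 = k + ?L" using ps0[of j2] j1l j2 u2 p1 by simp
      then have p2: "pos n ?U j2 + 1 = k" by simp
      have E0: "subword_W (pos n ?U j2) ?L = ?A" using blkA[of j2] j1l j2 u2 by simp
      have pj: "pos n ?U j1 = pos n ?U j2 + ?L" using p1 p2 by linarith
      have w: "W (pos n ?U j2 + ?L) = 1" using blk1[of j1] j1l u1 pj by simp
      have "cnt ?A (pos n ?U j2 + 1) = ones ?A + 1" using LA[of "pos n ?U j2" n] E0 w by simp
      then have "cnt ?A k = ones ?A + 1" using p2 by simp
      then show ?thesis using goal_from cS by simp
    next
      case nE2: False
      show ?thesis
      proof (cases "subword_W (k+2*?L+1) ?L = ?A")
        case E3: True
        obtain j where j: "j < length ?U" "?U ! j = 0" "k + 2*?L+1 = pos n ?U j" using occ[of "k+2*?L+1"] E3 by auto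
        obtain j1 where j1: "j = Suc j1" using j by (cases j) auto
        have j1l: "j1 < length ?U" using j j1 by simp
        show ?thesis
        proof (cases "?U ! j1 = 0")
          case True
          have "pos n ?U j1 = k + ?L + 1" using ps0[of j1] j1l j j1 True by simp
          then have "subword_W (k+?L+1) ?L = ?A" using blkA[of j1] j1l True by simp
          then have "cnt ?A (k+?L) \<ge> ones ?A" using LB[of "k+?L" n] by simp
          moreover have "1 \<le> cnt ?A k" using IH1 nE1 by simp
          ultimately have "ones ?A + 1 \<le> c'" using cS by simp
          then show ?thesis using goal_from by simp
        next
          case u1: False
          have p1: "pos n ?U j1 = k + 2*?L" using ps1[of j1] j1l u1 j j1 by simp
          obtain j2 where j2: "j1 = Suc j2" using u1 U0 by (cases j1) auto
          have u2: "?U ! j2 = 0" using Ub[of j2] j1l u1 j2 by simp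
          have "pos n ?U j2 = k + ?L" using ps0[of j2] j1l j2 u2 p1 by simp
          then have "subword_W (k+?L) ?L = ?A" using blkA[of j2] j1l j2 u2 by simp
          then show ?thesis using nE2 by simp
        qed
      next
        case nE3: False
        have "3^n + 3 \<le> 6 * cnt ?A k" "3^n + 3 \<le> 6 * cnt ?A (k+?L)" "3^n + 3 \<le> 6 * cnt ?A (k+2*?L+1)"
          using Suc.IH nE1 nE2 nE3 by auto
        then have "3 * 3^n + 3 \<le> 6 * c'" using cS by linarith
        then show ?thesis unfolding c'_def by simp
      qed
    qed
  qed
qed




theorem lemma2:
  fixes n k :: nat
  assumes "subword_W k (length (Wm n)) \<noteq> Wm n"
  shows "d0 (Wm n) (subword_W k (length (Wm n))) > 1/6"
proof -
  let ?a = "Wm n" let ?b = "subword_W k (length (Wm n))"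
  have num: "card {i. i < length ?a \<and> ?a ! i = 0 \<and> ?b ! i = 1} = cnt ?a k"
  proof -
    have "cnt ?a k = card {i. i < length (zip ?a ?b) \<and> (\<lambda>(a,b). a = 0 \<and> b = 1) (zip ?a ?b ! i)}"
      unfolding cnt_def pc_def by (rule length_filter_conv_card)
    also have "\<dots> = card {i. i < length ?a \<and> ?a ! i = 0 \<and> ?b ! i = 1}"
      by (rule arg_cong[where f=card]) auto
    finally show ?thesis by simp
  qed
  have den: "card {i. i < length ?a \<and> ?a ! i = 0} = 3^n"
    using length_filter_conv_card[of "\<lambda>x. x = 0" ?a] Wm_zeros[of n] by simp
  have m: "3^n + 3 \<le> 6 * cnt ?a k" using main assms by blast
  have "real (3^n) < 6 * real (cnt ?a k)" using m by linarith
  then have "1/6 < real (cnt ?a k) / real (3^n)" by (simp add: field_simps)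
  then show ?thesis unfolding d0_def num den by simp
qed


end
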